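(* Let $A$ be an algebra of Engel type. Then $A$ can be embedded into a prime algebra of Engel type.
   Context: An algebra here is a finite-dimensional vector space $A$ over a field $\Bbbk$ of characteristic zero with finitely many symmetric multilinear operations $\Psi_\ell:A^\ell\to A$, $2\le\ell\le m$ (equivalently, via $x\mapsto x-\sum_\ell\Psi_\ell(x,\dots,x)$, a polynomial self-map of $A$). An ideal is a subspace $I$ with $\Psi_\ell(a_1,\dots,a_\ell)\in I$ whenever some $a_i\in I$. The algebra is prime if it has no nonzero ideals with zero product, where the product of ideals $I,J$ is the span of values of operations with one argument in $I$, one in $J$, and the rest arbitrary. An embedding is an injective linear map compatible with the operations. For $x\in A$ let $\mathrm{Ad}_{\ell-1}(x):y\mapsto\Psi_\ell(y,x,\dots,x)$ and $E_s(x)=\sum \ell_1\cdots\ell_q\,\mathrm{Ad}_{\ell_1-1}(x)\circ\cdots\circ\mathrm{Ad}_{\ell_q-1}(x)$ over all $q\ge1$, $2\le\ell_i\le m$, $\sum(\ell_i-1)=s$. $A$ is of Engel type if there is $s_0$ with $E_s(x)=0$ for all $x\in A$, $s\ge s_0$ (equivalently, the map $x\mapsto x-\sum_\ell\Psi_\ell(x,\dots,x)$ has Jacobian determinant $1$). *)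

theory Defs
  imports Main "HOL-Library.Multiset"
begin

text \<open>Vectors of the standard space k^n are represented as functions nat => k
  vanishing from index n on.  An algebra is given by its dimension n, the bound m
  on the arities, and the family of operations Psi l (applied to lists of l arguments).\<close>

type_synonym 'k vec = "nat \<Rightarrow> 'k"

definition fvec :: "nat \<Rightarrow> ('k::zero) vec set" where
  "fvec n = {v. \<forall>i\<ge>n. v i = 0}"

definition vzero :: "('k::zero) vec" where "vzero = (\<lambda>i. 0)"

definition vadd :: "('k::plus) vec \<Rightarrow> 'k vec \<Rightarrow> 'k vec" where
  "vadd x y = (\<lambda>i. x i + y i)"

definition vscale :: "'k::times \<Rightarrow> 'k vec \<Rightarrow> 'k vec" where
  "vscale c x = (\<lambda>i. c * x i)"

definition is_algebra ::
  "nat \<Rightarrow> nat \<Rightarrow> (nat \<Rightarrow> ('k::field_char_0) vec list \<Rightarrow> 'k vec) \<Rightarrow> bool" where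
  "is_algebra n m Psi \<longleftrightarrow>
     2 \<le> m \<and>
     (\<forall>l\<in>{2..m}. \<forall>xs. length xs = l \<and> set xs \<subseteq> fvec n \<longrightarrow> Psi l xs \<in> fvec n) \<and>
     (\<forall>l\<in>{2..m}. \<forall>xs ys x y c. length xs + length ys + 1 = l \<and> set xs \<subseteq> fvec n \<and>
          set ys \<subseteq> fvec n \<and> x \<in> fvec n \<and> y \<in> fvec n \<longrightarrow>
          Psi l (xs @ [vadd x (vscale c y)] @ ys) =
            vadd (Psi l (xs @ [x] @ ys)) (vscale c (Psi l (xs @ [y] @ ys)))) \<and>
     (\<forall>l\<in>{2..m}. \<forall>xs ys. length xs = l \<and> set xs \<subseteq> fvec n \<and> mset xs = mset ys
          \<longrightarrow> Psi l xs = Psi l ys)"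

definition is_subspace :: "nat \<Rightarrow> ('k::field) vec set \<Rightarrow> bool" where
  "is_subspace n I \<longleftrightarrow> I \<subseteq> fvec n \<and> vzero \<in> I \<and>
     (\<forall>x\<in>I. \<forall>y\<in>I. vadd x y \<in> I) \<and> (\<forall>c. \<forall>x\<in>I. vscale c x \<in> I)"

definition is_ideal ::
  "nat \<Rightarrow> nat \<Rightarrow> (nat \<Rightarrow> ('k::field_char_0) vec list \<Rightarrow> 'k vec) \<Rightarrow> 'k vec set \<Rightarrow> bool" where
  "is_ideal n m Psi I \<longleftrightarrow> is_subspace n I \<and>
     (\<forall>l\<in>{2..m}. \<forall>xs. length xs = l \<and> set xs \<subseteq> fvec n \<and> (\<exists>a\<in>set xs. a \<in> I)
        \<longrightarrow> Psi l xs \<in> I)"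

definition ideal_prod ::
  "nat \<Rightarrow> nat \<Rightarrow> (nat \<Rightarrow> ('k::field_char_0) vec list \<Rightarrow> 'k vec) \<Rightarrow> 'k vec set \<Rightarrow> 'k vec set
     \<Rightarrow> 'k vec set" where
  "ideal_prod n m Psi I J =
     \<Inter>{S. is_subspace n S \<and>
          {Psi l xs | l xs. l \<in> {2..m} \<and> length xs = l \<and> set xs \<subseteq> fvec n \<and>
             (\<exists>i j. i < l \<and> j < l \<and> i \<noteq> j \<and> xs ! i \<in> I \<and> xs ! j \<in> J)} \<subseteq> S}"

definition is_prime_algebra ::
  "nat \<Rightarrow> nat \<Rightarrow> (nat \<Rightarrow> ('k::field_char_0) vec list \<Rightarrow> 'k vec) \<Rightarrow> bool" where
  "is_prime_algebra n m Psi \<longleftrightarrow>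
     (\<forall>I J. is_ideal n m Psi I \<and> is_ideal n m Psi J \<and> ideal_prod n m Psi I J = {vzero}
        \<longrightarrow> I = {vzero} \<or> J = {vzero})"

definition Ad :: "(nat \<Rightarrow> ('k::field_char_0) vec list \<Rightarrow> 'k vec) \<Rightarrow> nat \<Rightarrow> 'k vec \<Rightarrow> 'k vec \<Rightarrow> 'k vec" where
  "Ad Psi l x y = Psi l (y # replicate (l - 1) x)"

definition E_index :: "nat \<Rightarrow> nat \<Rightarrow> nat list set" where
  "E_index m s = {ls. ls \<noteq> [] \<and> set ls \<subseteq> {2..m} \<and> sum_list (map (\<lambda>l. l - 1) ls) = s}"

definition E_op ::
  "nat \<Rightarrow> (nat \<Rightarrow> ('k::field_char_0) vec list \<Rightarrow> 'k vec) \<Rightarrow> nat \<Rightarrow> 'k vec \<Rightarrow> 'k vec \<Rightarrow> 'k vec" where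
  "E_op m Psi s x y = (\<lambda>i. \<Sum>ls\<in>E_index m s.
      of_nat (prod_list ls) * (foldr (\<lambda>l v. Ad Psi l x v) ls y) i)"

definition engel_type ::
  "nat \<Rightarrow> nat \<Rightarrow> (nat \<Rightarrow> ('k::field_char_0) vec list \<Rightarrow> 'k vec) \<Rightarrow> bool" where
  "engel_type n m Psi \<longleftrightarrow>
     (\<exists>s0. \<forall>s\<ge>s0. \<forall>x\<in>fvec n. \<forall>y\<in>fvec n. E_op m Psi s x y = vzero)"

definition is_embedding ::
  "nat \<Rightarrow> nat \<Rightarrow> (nat \<Rightarrow> ('k::field_char_0) vec list \<Rightarrow> 'k vec) \<Rightarrow>
   nat \<Rightarrow> (nat \<Rightarrow> 'k vec list \<Rightarrow> 'k vec) \<Rightarrow> ('k vec \<Rightarrow> 'k vec) \<Rightarrow> bool" where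
  "is_embedding n m Psi n' Psi' f \<longleftrightarrow>
     f ` fvec n \<subseteq> fvec n' \<and> inj_on f (fvec n) \<and>
     (\<forall>x\<in>fvec n. \<forall>y\<in>fvec n. \<forall>c. f (vadd x (vscale c y)) = vadd (f x) (vscale c (f y))) \<and>
     (\<forall>l\<in>{2..m}. \<forall>xs. length xs = l \<and> set xs \<subseteq> fvec n \<longrightarrow> f (Psi l xs) = Psi' l (map f xs))"

end

theory Submission
  imports Defs
begin


lemma alg_closed:
  assumes "is_algebra n m Psi" "l \<in> {2..m}" "length xs = l" "set xs \<subseteq> fvec n"
  shows "Psi l xs \<in> fvec n"
  using assms unfolding is_algebra_def by blast

lemma alg_lin:
  assumes "is_algebra n m Psi" "l \<in> {2..m}" "length xs + length ys + 1 = l"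
    "set xs \<subseteq> fvec n" "set ys \<subseteq> fvec n" "x \<in> fvec n" "y \<in> fvec n"
  shows "Psi l (xs @ [vadd x (vscale c y)] @ ys) =
            vadd (Psi l (xs @ [x] @ ys)) (vscale c (Psi l (xs @ [y] @ ys)))"
  using assms unfolding is_algebra_def by blast

lemma alg_sym:
  assumes "is_algebra n m Psi" "l \<in> {2..m}" "length xs = l" "set xs \<subseteq> fvec n" "mset xs = mset ys"
  shows "Psi l xs = Psi l ys"
  using assms unfolding is_algebra_def by blast

lemma vzero_fvec[simp]: "vzero \<in> fvec n"
  by (simp add: fvec_def vzero_def)

lemma alg_zero:
  assumes "is_algebra n m Psi" "l \<in> {2..m}" "length xs + length ys + 1 = l"
    "set xs \<subseteq> fvec n" "set ys \<subseteq> fvec n"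
  shows "Psi l (xs @ [vzero] @ ys) = vzero"
proof -
  have e: "vadd vzero (vscale 1 vzero) = (vzero::'a vec)"
    by (simp add: vadd_def vscale_def vzero_def)
  have "Psi l (xs @ [vzero] @ ys) = vadd (Psi l (xs @ [vzero] @ ys)) (vscale 1 (Psi l (xs @ [vzero] @ ys)))"
    using alg_lin[OF assms(1-5), of vzero vzero 1] e by simp
  then show ?thesis
    by (auto simp: vadd_def vscale_def vzero_def fun_eq_iff)
qed

definition piA :: "nat \<Rightarrow> ('k::zero) vec \<Rightarrow> 'k vec" where
  "piA n v = (\<lambda>i. if i < n then v i else 0)"

lemma piA_fvec[simp]: "piA n v \<in> fvec n"
  by (simp add: piA_def fvec_def)

lemma piA_id: "v \<in> fvec n \<Longrightarrow> piA n v = v"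
  by (auto simp: piA_def fvec_def fun_eq_iff)

lemma piA_lin: "piA n (vadd x (vscale c y)) = vadd (piA n x) (vscale (c::'k::field) (piA n y))"
  by (auto simp: piA_def vadd_def vscale_def fun_eq_iff)

lemma fvec_mono: "n \<le> n' \<Longrightarrow> fvec n \<subseteq> fvec n'"
  by (auto simp: fvec_def)




definition Gl :: "nat \<Rightarrow> ('k::comm_ring_1) vec \<Rightarrow> 'k vec \<Rightarrow> 'k" where
  "Gl n x y = (\<Sum>j<n. x j * y (n+j) + y j * x (n+j))"

definition Qm :: "nat \<Rightarrow> ('k::comm_ring_1) vec \<Rightarrow> 'k vec \<Rightarrow> 'k vec" where
  "Qm n x y = (\<lambda>i.
     if i = 2*n then x(2*n+3)*y(2*n+1) + x(2*n+1)*y(2*n+3) + x(2*n+5)*y(2*n+3) + x(2*n+3)*y(2*n+5) + Gl n x y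
     else if i = 2*n+1 then x(2*n+3)*y(2*n+2) + x(2*n+2)*y(2*n+3) + x(2*n+4)*y(2*n) + x(2*n)*y(2*n+4)
     else if i = 2*n+2 then -(x(2*n+4)*y(2*n+1) + x(2*n+1)*y(2*n+4) + x(2*n+5)*y(2*n+4) + x(2*n+4)*y(2*n+5))
     else if i = 2*n+5 then x(2*n+1)*y(2*n+1) else 0)"

definition PsiB :: "nat \<Rightarrow> (nat \<Rightarrow> ('k::field_char_0) vec list \<Rightarrow> 'k vec) \<Rightarrow> nat \<Rightarrow> 'k vec list \<Rightarrow> 'k vec" where
  "PsiB n Psi l xs = (if l = 2 then vadd (Psi 2 (map (piA n) xs)) (Qm n (xs!0) (xs!1))
                      else Psi l (map (piA n) xs))"

lemma Gl_sym: "Gl n x y = Gl n y x"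
  unfolding Gl_def by (simp add: algebra_simps)

lemma Qm_sym: "Qm n x y = Qm n y x"
  unfolding Qm_def by (auto simp: fun_eq_iff algebra_simps Gl_sym)

lemma Gl_lin1: "Gl n (vadd x (vscale c y)) b = Gl n x b + c * Gl n y b"
  apply (simp add: Gl_def vadd_def vscale_def)
  apply (simp add: algebra_simps sum.distrib sum_distrib_left)
  done

lemma Qm_lin1: "Qm n (vadd x (vscale c y)) b = vadd (Qm n x b) (vscale c (Qm n y b))"
  unfolding Qm_def Gl_lin1 by (auto simp: fun_eq_iff algebra_simps vadd_def vscale_def)

lemma Qm_lin2: "Qm n b (vadd x (vscale c y)) = vadd (Qm n b x) (vscale c (Qm n b y))"
  using Qm_lin1[of n x c y b] by (simp add: Qm_sym)

lemma Qm_fvec: "Qm n x y \<in> fvec (2*n+6)"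
  unfolding Qm_def fvec_def by auto

lemma len2: "length xs = 2 \<Longrightarrow> \<exists>a b. xs = [a,b]"
  by (cases xs; cases "tl xs") auto

lemma mset2: "mset [a,b] = mset ys \<Longrightarrow> ys = [a,b] \<or> ys = [b,a]"
proof -
  assume h: "mset [a,b] = mset ys"
  then have "length ys = 2" using mset_eq_length by fastforce
  then obtain c d where ys: "ys = [c,d]" using len2 by blast
  show ?thesis using h unfolding ys by (auto simp: add_eq_conv_ex)
qed

lemma rearr: "vadd (vadd a (vscale c b)) (vadd d (vscale c e)) = vadd (vadd a d) (vscale (c::'k::comm_ring_1) (vadd b e))"
  by (simp add: vadd_def vscale_def fun_eq_iff algebra_simps)

lemma PsiB_alg:
  assumes A: "is_algebra n m Psi"
  shows "is_algebra (2*n+6) m (PsiB n Psi)"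
proof -
  have m2: "2 \<le> m" using A by (simp add: is_algebra_def)
  have sub: "fvec n \<subseteq> fvec (2*n+6)" by (rule fvec_mono) simp
  have cl: "PsiB n Psi l xs \<in> fvec (2*n+6)" if "l \<in> {2..m}" "length xs = l" for l xs
  proof -
    have "Psi l (map (piA n) xs) \<in> fvec n"
      by (rule alg_closed[OF A that(1)]) (auto simp: that)
    then have "Psi l (map (piA n) xs) \<in> fvec (2*n+6)" using sub by blast
    then show ?thesis using Qm_fvec[of n "xs!0" "xs!1"]
      by (auto simp: PsiB_def vadd_def fvec_def)
  qed
  have lin: "PsiB n Psi l (xs @ [vadd x (vscale c y)] @ ys) =
            vadd (PsiB n Psi l (xs @ [x] @ ys)) (vscale c (PsiB n Psi l (xs @ [y] @ ys)))"
    if "l \<in> {2..m}" "length xs + length ys + 1 = l" for l xs ys x y c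
  proof -
    have LA: "Psi l (map (piA n) (xs @ [vadd x (vscale c y)] @ ys)) =
       vadd (Psi l (map (piA n) (xs @ [x] @ ys))) (vscale c (Psi l (map (piA n) (xs @ [y] @ ys))))"
      using alg_lin[OF A that(1), of "map (piA n) xs" "map (piA n) ys" "piA n x" "piA n y" c] that(2)
      by (auto simp: piA_lin image_subset_iff)
    show ?thesis
    proof (cases "l = 2")
      case False
      then show ?thesis using LA by (simp add: PsiB_def)
    next
      case True
      then have "(xs = [] \<and> length ys = 1) \<or> (length xs = 1 \<and> ys = [])" using that(2) True by (cases xs) auto
      then have Q: "Qm n ((xs @ [vadd x (vscale c y)] @ ys)!0) ((xs @ [vadd x (vscale c y)] @ ys)!1)
          = vadd (Qm n ((xs @ [x] @ ys)!0) ((xs @ [x] @ ys)!1)) (vscale c (Qm n ((xs @ [y] @ ys)!0) ((xs @ [y] @ ys)!1)))"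
      proof
        assume "xs = [] \<and> length ys = 1"
        then obtain b where "xs = []" "ys = [b]" by (metis One_nat_def length_0_conv length_Suc_conv)
        then show ?thesis by (simp add: Qm_lin1)
      next
        assume "length xs = 1 \<and> ys = []"
        then obtain b where "xs = [b]" "ys = []" by (metis One_nat_def length_0_conv length_Suc_conv)
        then show ?thesis by (simp add: Qm_lin2)
      qed
      have eqB: "PsiB n Psi l L = vadd (Psi l (map (piA n) L)) (Qm n (L!0) (L!1))" for L
        using True by (simp add: PsiB_def)
      show ?thesis unfolding eqB LA Q by (rule rearr)
    qed
  qed
  have sym: "PsiB n Psi l xs = PsiB n Psi l ys"
    if l1: "l \<in> {2..m}" and l2: "length xs = l" and l3: "mset xs = mset ys" for l xs ys
  proof -
    have LA: "Psi l (map (piA n) xs) = Psi l (map (piA n) ys)"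
    proof (rule alg_sym[OF A l1])
      show "length (map (piA n) xs) = l" using l2 by simp
      show "set (map (piA n) xs) \<subseteq> fvec n" by auto
      show "mset (map (piA n) xs) = mset (map (piA n) ys)" by (simp only: mset_map l3)
    qed
    show ?thesis
    proof (cases "l = 2")
      case False
      then show ?thesis using LA by (simp add: PsiB_def)
    next
      case True
      then obtain a b where xs: "xs = [a,b]" using l2 len2 by blast
      then have "ys = [a,b] \<or> ys = [b,a]" using mset2[of a b ys] l3 by simp
      then show ?thesis
      proof
        assume "ys = [a,b]" then show ?thesis using xs by simp
      next
        assume ys: "ys = [b,a]"
        have "Qm n a b = Qm n b a" by (rule Qm_sym)
        then show ?thesis using LA True xs ys by (simp add: PsiB_def)
      qed
    qed
  qed
  show ?thesis unfolding is_algebra_def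
    apply (intro conjI m2)
    subgoal using cl by blast
    subgoal using lin by blast
    subgoal using sym by blast
    done
qed




definition uv :: "nat \<Rightarrow> ('k::zero_neq_one) vec" where "uv k = (\<lambda>i. if i = k then 1 else 0)"

lemma uv_fvec: "k < n \<Longrightarrow> uv k \<in> fvec n"
  by (auto simp: uv_def fvec_def)

lemma uv_nz: "uv k \<noteq> vzero"
  by (auto simp: uv_def vzero_def fun_eq_iff)

lemma piA_uv: "n \<le> k \<Longrightarrow> piA n (uv k) = vzero"
  by (auto simp: piA_def uv_def vzero_def fun_eq_iff)

lemma Gl_zero: "(\<And>i. i < 2*n \<Longrightarrow> x i = 0) \<Longrightarrow> Gl n x y = 0"
  unfolding Gl_def by (intro sum.neutral) auto

lemma Gl_uvP: assumes "2*n \<le> k" shows "Gl n x (uv k) = 0"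
  using assms unfolding Gl_def uv_def by (auto intro!: sum.neutral)

lemma Gl_uvA: "j < n \<Longrightarrow> Gl n x (uv j) = x (n+j)"
proof -
  assume j: "j < n"
  have "Gl n x (uv j) = (\<Sum>i<n. if i = j then x (n+i) else 0)"
    unfolding Gl_def uv_def using j by (intro sum.cong) auto
  also have "\<dots> = x (n+j)" using j by simp
  finally show ?thesis .
qed

lemma Gl_uvU: "j < n \<Longrightarrow> Gl n x (uv (n+j)) = x j"
proof -
  assume j: "j < n"
  have "Gl n x (uv (n+j)) = (\<Sum>i<n. if i = j then x i else 0)"
    unfolding Gl_def uv_def by (intro sum.cong) auto
  also have "\<dots> = x j" using j by simp
  finally show ?thesis .
qed

lemma mulQ:
  assumes A: "is_algebra n m Psi" and h: "piA n x = vzero \<or> piA n y = vzero"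
  shows "PsiB n Psi 2 [x,y] = Qm n x y"
proof -
  have m2: "2 \<in> {2..m}" using A by (simp add: is_algebra_def)
  have "Psi 2 [piA n x, piA n y] = vzero"
    using h
  proof
    assume "piA n x = vzero"
    then show ?thesis using alg_zero[OF A m2, of "[]" "[piA n y]"] by simp
  next
    assume "piA n y = vzero"
    then show ?thesis using alg_zero[OF A m2, of "[piA n x]" "[]"] by simp
  qed
  then show ?thesis by (simp add: PsiB_def vadd_def vzero_def)
qed

lemma Qm_A0: "x \<in> fvec n \<Longrightarrow> y \<in> fvec n \<Longrightarrow> Qm n x y = vzero"
proof -
  assume x: "x \<in> fvec n" and y: "y \<in> fvec n"
  have "Gl n x y = 0" unfolding Gl_def
    using x y by (intro sum.neutral) (auto simp: fvec_def)
  then show ?thesis using x y by (auto simp: Qm_def fvec_def vzero_def fun_eq_iff)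
qed

lemma embed:
  fixes Psi :: "nat \<Rightarrow> ('k::field_char_0) vec list \<Rightarrow> 'k vec"
  assumes A: "is_algebra n m Psi"
  shows "is_embedding n m Psi (2*n+6) (PsiB n Psi) (\<lambda>x. x)"
  unfolding is_embedding_def
proof (intro conjI ballI allI impI)
  show "(\<lambda>x. x) ` fvec n \<subseteq> fvec (2 * n + 6)" using fvec_mono[of n "2*n+6"] by simp
  show "inj_on (\<lambda>x. x) (fvec n)" by simp
  fix x y :: "'k vec" and c :: 'k show "vadd x (vscale c y) = vadd x (vscale c y)" by simp
next
  fix l and xs :: "'k vec list" assume l: "l \<in> {2..m}" and h: "length xs = l \<and> set xs \<subseteq> fvec n"
  have mp: "map (piA n) xs = xs" using h by (auto intro!: map_idI piA_id)
  show "Psi l xs = PsiB n Psi l (map (\<lambda>x. x) xs)"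
  proof (cases "l = 2")
    case True
    then have "xs!0 \<in> fvec n" "xs!1 \<in> fvec n" using h by auto
    then have "Qm n (xs!0) (xs!1) = vzero" by (rule Qm_A0)
    then show ?thesis using True mp by (simp add: PsiB_def vadd_def vzero_def)
  next
    case False
    then show ?thesis using mp by (simp add: PsiB_def)
  qed
qed




lemma Gl_uvP': "2*n \<le> k \<Longrightarrow> Gl n x (\<lambda>i. if i = k then 1 else 0) = 0"
  using Gl_uvP[of n k x] by (simp add: uv_def)
lemma Gl_uvU': "j < n \<Longrightarrow> Gl n x (\<lambda>i. if i = n + j then 1 else 0) = x j"
  using Gl_uvU[of j n x] by (simp add: uv_def)
lemma Gl_uvA': "j < n \<Longrightarrow> Gl n x (\<lambda>i. if i = j then 1 else 0) = x (n+j)"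
  using Gl_uvA[of j n x] by (simp add: uv_def)

lemma Lw1: "Qm n x (uv(2*n+3)) = vadd (vscale (x(2*n+1)+x(2*n+5)) (uv(2*n))) (vscale (x(2*n+2)) (uv(2*n+1)))"
  by (auto simp: Qm_def Gl_uvP' uv_def vadd_def vscale_def fun_eq_iff)
lemma Lw2: "Qm n x (uv(2*n+4)) = vadd (vscale (x(2*n)) (uv(2*n+1))) (vscale (-(x(2*n+1)+x(2*n+5))) (uv(2*n+2)))"
  by (auto simp: Qm_def Gl_uvP' uv_def vadd_def vscale_def fun_eq_iff)
lemma Le1: "Qm n x (uv(2*n)) = vscale (x(2*n+4)) (uv(2*n+1))"
  by (auto simp: Qm_def Gl_uvP' uv_def vadd_def vscale_def fun_eq_iff)
lemma Le3: "Qm n x (uv(2*n+2)) = vscale (x(2*n+3)) (uv(2*n+1))"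
  by (auto simp: Qm_def Gl_uvP' uv_def vadd_def vscale_def fun_eq_iff)
lemma Le2: "Qm n x (uv(2*n+1)) = vadd (vadd (vscale (x(2*n+3)) (uv (2*n))) (vscale (-x(2*n+4)) (uv(2*n+2)))) (vscale (x(2*n+1)) (uv(2*n+5)))"
  by (auto simp: Qm_def Gl_uvP' uv_def vadd_def vscale_def fun_eq_iff)
lemma LU: "j < n \<Longrightarrow> Qm n x (uv(n+j)) = vscale (x j) (uv(2*n))"
  by (auto simp: Qm_def Gl_uvU' uv_def vadd_def vscale_def fun_eq_iff)
lemma LA: "j < n \<Longrightarrow> Qm n x (uv j) = vscale (x (n+j)) (uv(2*n))"
  by (auto simp: Qm_def Gl_uvA' uv_def vadd_def vscale_def fun_eq_iff)

lemma ideal_sub: "is_ideal n m Psi I \<Longrightarrow> I \<subseteq> fvec n"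
  by (simp add: is_ideal_def is_subspace_def)

lemma ideal_mul:
  assumes "is_ideal n m Psi I" "2 \<le> m" "x \<in> I" "y \<in> fvec n"
  shows "Psi 2 [x,y] \<in> I"
proof -
  have "x \<in> fvec n" using assms ideal_sub by blast
  then show ?thesis using assms unfolding is_ideal_def by auto
qed

lemma ideal_uv:
  assumes "is_ideal n m Psi I" "w \<in> I" "w = vscale c (uv k)" "c \<noteq> 0"
  shows "uv k \<in> I"
proof -
  have "vscale (inverse c) w \<in> I" using assms(1,2) by (simp add: is_ideal_def is_subspace_def)
  moreover have "vscale (inverse c) w = uv k" using assms(3,4) by (simp add: vscale_def fun_eq_iff)
  ultimately show ?thesis by simp
qed

lemma vadd_s0: "vadd u (vscale 0 v) = (u::'k::field vec)"
  by (simp add: vadd_def vscale_def fun_eq_iff)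
lemma vadd_s0': "vadd (vscale 0 v) u = (u::'k::field vec)"
  by (simp add: vadd_def vscale_def fun_eq_iff)

lemma e2_in:
  fixes Psi :: "nat \<Rightarrow> ('k::field_char_0) vec list \<Rightarrow> 'k vec"
  assumes A: "is_algebra n m Psi" and I: "is_ideal (2*n+6) m (PsiB n Psi) I"
    and x: "x \<in> I" and xnz: "x \<noteq> vzero"
  shows "uv (2*n+1) \<in> I"
proof -
  let ?B = "PsiB n Psi"
  have m2: "2 \<le> m" using A by (simp add: is_algebra_def)
  have xf: "x \<in> fvec (2*n+6)" using I x ideal_sub by blast
  have uvf: "k < 2*n+6 \<Longrightarrow> uv k \<in> fvec (2*n+6)" for k by (rule uv_fvec)
  have mul: "?B 2 [v, uv k] \<in> I" if "v \<in> I" "k < 2*n+6" for v k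
    using ideal_mul[OF I m2 that(1) uvf[OF that(2)]] .
  have mulP: "?B 2 [v, uv k] = Qm n v (uv k)" if "n \<le> k" for v k
    using mulQ[OF A] piA_uv[OF that] by blast
  have e1e2: "uv (2*n+1) \<in> I" if "uv (2*n) \<in> I"
  proof -
    have "?B 2 [uv (2*n), uv (2*n+4)] = uv (2*n+1)"
      by (simp add: mulP Lw2) (auto simp: uv_def vadd_def vscale_def fun_eq_iff)
    then show ?thesis using mul[OF that, of "2*n+4"] by simp
  qed
  show ?thesis
  proof (cases "\<exists>j<n. x j \<noteq> 0")
    case True
    then obtain j where j: "j < n" "x j \<noteq> 0" by blast
    have "?B 2 [x, uv (n+j)] = vscale (x j) (uv (2*n))"
      using mulP[of "n+j" x] LU[OF j(1)] by simp
    then have "uv (2*n) \<in> I" using ideal_uv[OF I mul[OF x, of "n+j"]] j by simp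
    then show ?thesis by (rule e1e2)
  next
    case False
    then have xA: "\<And>j. j < n \<Longrightarrow> x j = 0" by blast
    then have pA: "piA n x = vzero" by (auto simp: piA_def vzero_def fun_eq_iff)
    show ?thesis
    proof (cases "\<exists>j<n. x (n+j) \<noteq> 0")
      case True
      then obtain j where j: "j < n" "x (n+j) \<noteq> 0" by blast
      have "?B 2 [x, uv j] = vscale (x (n+j)) (uv (2*n))"
        using mulQ[OF A] pA LA[OF j(1)] by simp
      then have "uv (2*n) \<in> I" using ideal_uv[OF I mul[OF x, of j]] j by simp
      then show ?thesis by (rule e1e2)
    next
      case False
      then have xU: "\<And>j. j < n \<Longrightarrow> x (n+j) = 0" by blast
      have mulx: "?B 2 [x, uv k] = Qm n x (uv k)" for k using mulQ[OF A] pA by blast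
      show ?thesis
      proof (cases "x (2*n+4) \<noteq> 0")
        case True
        show ?thesis by (rule ideal_uv[OF I mul[OF x, of "2*n"] _ True]) (simp, simp only: mulx Le1)
      next
        case p4: False
        show ?thesis
        proof (cases "x (2*n+3) \<noteq> 0")
          case True
          show ?thesis by (rule ideal_uv[OF I mul[OF x, of "2*n+2"] _ True]) (simp, simp only: mulx Le3)
        next
          case p3: False
          have qI: "Qm n x (uv(2*n+3)) \<in> I" using mul[OF x, of "2*n+3"] mulx by simp
          show ?thesis
          proof (cases "x (2*n+2) \<noteq> 0")
            case True
            let ?q = "Qm n x (uv(2*n+3))"
            have "?B 2 [?q, uv (2*n+3)] = Qm n ?q (uv (2*n+3))" by (rule mulP) simp
            also have "\<dots> = vscale (x (2*n+2)) (uv (2*n))"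
              by (simp add: Lw1) (simp add: uv_def vadd_def vscale_def fun_eq_iff)
            finally have "uv (2*n) \<in> I" using ideal_uv[OF I mul[OF qI, of "2*n+3"], of "x(2*n+2)" "2*n"] True by simp
            then show ?thesis by (rule e1e2)
          next
            case p2: False
            show ?thesis
            proof (cases "x(2*n+1)+x(2*n+5) \<noteq> 0")
              case True
              have "Qm n x (uv(2*n+3)) = vscale (x(2*n+1)+x(2*n+5)) (uv(2*n))"
                using p2 by (simp add: Lw1 vadd_s0)
              then have "uv (2*n) \<in> I" using ideal_uv[OF I qI, of "x(2*n+1)+x(2*n+5)" "2*n"] True by simp
              then show ?thesis by (rule e1e2)
            next
              case p15: False
              show ?thesis
              proof (cases "x (2*n) \<noteq> 0")
                case True
                have q4: "Qm n x (uv(2*n+4)) = vscale (x(2*n)) (uv(2*n+1))"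
                  using p15 by (simp add: Lw2 vadd_s0)
                show ?thesis by (rule ideal_uv[OF I mul[OF x, of "2*n+4"] _ True]) (simp, simp only: mulx q4)
              next
                case p0: False
                have p1: "x (2*n+1) \<noteq> 0"
                proof
                  assume h: "x (2*n+1) = 0"
                  have "x = vzero"
                  proof
                    fix i
                    show "x i = vzero i"
                    proof (cases "i < 2*n + 6")
                      case False then show ?thesis using xf by (simp add: fvec_def vzero_def)
                    next
                      case True
                      then have "i < n \<or> (\<exists>j<n. i = n+j) \<or> i = 2*n \<or> i = 2*n+1 \<or> i = 2*n+2 \<or> i = 2*n+3
                        \<or> i = 2*n+4 \<or> i = 2*n+5"
                        by presburger
                      then show ?thesis using xA xU h p0 p2 p3 p4 p15 by (auto simp: vzero_def)
                    qed
                  qed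
                  then show False using xnz by simp
                qed
                have zq: "Qm n x (uv(2*n+1)) = vscale (x(2*n+1)) (uv(2*n+5))"
                  unfolding Le2 using p3 p4 by (simp add: vadd_s0')
                have zI: "uv (2*n+5) \<in> I"
                  using ideal_uv[OF I mul[OF x, of "2*n+1"], of "x(2*n+1)" "2*n+5"] mulx zq p1 by simp
                have "?B 2 [uv (2*n+5), uv (2*n+3)] = uv (2*n)"
                  by (simp add: mulP Lw1) (auto simp: uv_def vadd_def vscale_def fun_eq_iff)
                then have "uv (2*n) \<in> I" using mul[OF zI, of "2*n+3"] by simp
                then show ?thesis by (rule e1e2)
              qed
            qed
          qed
        qed
      qed
    qed
  qed
qed




lemma Lz: "Qm n (uv(2*n+1)) (uv(2*n+1)) = uv(2*n+5)"
  by (auto simp: Qm_def Gl_uvP' uv_def fun_eq_iff)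

lemma primeB:
  fixes Psi :: "nat \<Rightarrow> ('k::field_char_0) vec list \<Rightarrow> 'k vec"
  assumes A: "is_algebra n m Psi"
  shows "is_prime_algebra (2*n+6) m (PsiB n Psi)"
  unfolding is_prime_algebra_def
proof (intro allI impI)
  fix I J :: "'k vec set"
  assume h: "is_ideal (2*n+6) m (PsiB n Psi) I \<and> is_ideal (2*n+6) m (PsiB n Psi) J \<and>
     ideal_prod (2*n+6) m (PsiB n Psi) I J = {vzero}"
  have m2: "2 \<le> m" using A by (simp add: is_algebra_def)
  show "I = {vzero} \<or> J = {vzero}"
  proof (rule ccontr)
    assume "\<not> (I = {vzero} \<or> J = {vzero})"
    moreover have "vzero \<in> I" "vzero \<in> J" using h by (auto simp: is_ideal_def is_subspace_def)
    ultimately obtain x y where x: "x \<in> I" "x \<noteq> vzero" and y: "y \<in> J" "y \<noteq> vzero" by blast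
    have eI: "uv (2*n+1) \<in> I" using e2_in[OF A _ x] h by blast
    have eJ: "uv (2*n+1) \<in> J" using e2_in[OF A _ y] h by blast
    have pe: "PsiB n Psi 2 [uv (2*n+1), uv (2*n+1)] = uv (2*n+5)"
    proof -
      have "piA n (uv (2*n+1)) = (vzero :: 'k vec)" by (rule piA_uv) simp
      then have "PsiB n Psi 2 [uv (2*n+1), uv (2*n+1)] = Qm n (uv (2*n+1)) (uv (2*n+1))"
        using mulQ[OF A] by blast
      then show ?thesis by (simp only: Lz)
    qed
    have f: "uv (2*n+1) \<in> fvec (2*n+6)" by (rule uv_fvec) simp
    have gen: "uv (2*n+5) \<in> {PsiB n Psi l xs | l xs. l \<in> {2..m} \<and> length xs = l \<and> set xs \<subseteq> fvec (2*n+6) \<and>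
             (\<exists>i j. i < l \<and> j < l \<and> i \<noteq> j \<and> xs ! i \<in> I \<and> xs ! j \<in> J)}"
    proof -
      let ?e = "uv (2*n+1) :: 'k vec"
      have ij: "\<exists>i j. i < 2 \<and> j < 2 \<and> i \<noteq> j \<and> [?e,?e] ! i \<in> I \<and> [?e,?e] ! j \<in> J"
        using eI eJ by (intro exI[of _ 0] exI[of _ 1]) simp
      have "uv (2*n+5) = PsiB n Psi 2 [?e,?e] \<and> (2::nat) \<in> {2..m} \<and> length [?e,?e] = 2 \<and>
          set [?e,?e] \<subseteq> fvec (2*n+6)"
        using pe m2 f by simp
      then show ?thesis using ij by blast
    qed
    have "uv (2*n+5) \<in> ideal_prod (2*n+6) m (PsiB n Psi) I J"
      unfolding ideal_prod_def using gen by blast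
    then have "uv (2*n+5) = (vzero :: 'k vec)" using h by simp
    then show False using uv_nz by blast
  qed
qed




lemma len_le_sum: "set ls \<subseteq> {2..m} \<Longrightarrow> length ls \<le> sum_list (map (\<lambda>l. l - 1) ls)"
  by (induction ls) auto

lemma E_index_finite: "finite (E_index m s)"
proof (rule finite_subset)
  show "E_index m s \<subseteq> {xs. set xs \<subseteq> {2..m} \<and> length xs \<le> s}"
    unfolding E_index_def using len_le_sum by fastforce
  show "finite {xs. set xs \<subseteq> {2..m} \<and> length xs \<le> s}"
    by (rule finite_lists_length_le) simp
qed

lemma E_index_Cons:
  assumes "2 \<le> m" "2 \<le> s"
  shows "{ls \<in> E_index m s. hd ls = 2} = (Cons 2) ` E_index m (s - 1)"
proof
  show "{ls \<in> E_index m s. hd ls = 2} \<subseteq> (Cons 2) ` E_index m (s - 1)"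
  proof
    fix ls assume h: "ls \<in> {ls \<in> E_index m s. hd ls = 2}"
    then obtain r where ls: "ls = 2 # r" unfolding E_index_def by (cases ls) auto
    have "r \<noteq> []" using h assms unfolding ls E_index_def by auto
    then have "r \<in> E_index m (s - 1)" using h unfolding ls E_index_def by auto
    then show "ls \<in> (Cons 2) ` E_index m (s - 1)" using ls by blast
  qed
  show "(Cons 2) ` E_index m (s - 1) \<subseteq> {ls \<in> E_index m s. hd ls = 2}"
    using assms unfolding E_index_def by auto
qed

lemma Qm_sum1:
  assumes "finite R"
  shows "Qm n (\<lambda>j. \<Sum>r\<in>R. c r * f r j) x i = (\<Sum>r\<in>R. c r * Qm n (f r) x i)"
proof -
  have G: "Gl n (\<lambda>j. \<Sum>r\<in>R. c r * f r j) x = (\<Sum>r\<in>R. c r * Gl n (f r) x)"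
    unfolding Gl_def
    by (simp add: sum_distrib_left sum_distrib_right sum.distrib algebra_simps sum.swap[of _ R])
  show ?thesis
    unfolding Qm_def G
    by (simp add: sum_distrib_right sum.distrib ring_distribs mult.assoc sum_negf sum_subtractf)
qed




definition Pc :: "nat \<Rightarrow> nat \<Rightarrow> bool" where
  "Pc n i \<longleftrightarrow> i = 2*n \<or> i = 2*n+1 \<or> i = 2*n+2 \<or> i = 2*n+5"

definition Ponly :: "nat \<Rightarrow> ('k::zero) vec \<Rightarrow> bool" where
  "Ponly n v \<longleftrightarrow> (\<forall>i. \<not> Pc n i \<longrightarrow> v i = 0)"

definition stepP :: "nat \<Rightarrow> ('k::comm_ring_1) vec \<Rightarrow> 'k vec \<Rightarrow> 'k vec" where
  "stepP n x v = (\<lambda>i. if i = 2*n then 2*(x(2*n+3)*(v(2*n+1)+v(2*n+5)))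
     else if i = 2*n+1 then 2*(x(2*n+3)*v(2*n+2) + x(2*n+4)*v(2*n))
     else if i = 2*n+2 then -(2*(x(2*n+4)*(v(2*n+1)+v(2*n+5))))
     else if i = 2*n+5 then 2*(x(2*n+1)*v(2*n+1)) else 0)"
lemma stepP_at:
  "stepP n x v (2*n) = 2*(x(2*n+3)*(v(2*n+1)+v(2*n+5)))"
  "stepP n x v (2*n+1) = 2*(x(2*n+3)*v(2*n+2) + x(2*n+4)*v(2*n))"
  "stepP n x v (2*n+2) = -(2*(x(2*n+4)*(v(2*n+1)+v(2*n+5))))"
  "stepP n x v (2*n+5) = 2*(x(2*n+1)*v(2*n+1))"
  by (simp_all add: stepP_def)
lemma stepP2: "stepP n x (stepP n x v) (2*n+1) = 0"
  by (simp only: stepP_at) (simp add: algebra_simps)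
lemma stepP4: "stepP n x (stepP n x (stepP n x (stepP n x v))) = (vzero :: 'k::comm_ring_1 vec)"
proof
  fix i
  let ?u = "stepP n x (stepP n x v)"
  let ?w = "stepP n x ?u"
  have w1: "?w (2*n+1) = 0" by (rule stepP2)
  have u1: "?u (2*n+1) = 0" by (rule stepP2)
  have w5: "?w (2*n+5) = 0" unfolding stepP_at(4)[of n x ?u] u1 by simp
  have a: "stepP n x ?w (2*n) = 0" unfolding stepP_at(1)[of n x ?w] w1 w5 by simp
  have b: "stepP n x ?w (2*n+2) = 0" unfolding stepP_at(3)[of n x ?w] w1 w5 by simp
  have c: "stepP n x ?w (2*n+1) = 0" by (rule stepP2)
  have d: "stepP n x ?w (2*n+5) = 0" unfolding stepP_at(4)[of n x ?w] w1 by simp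
  show "stepP n x ?w i = vzero i"
  proof (cases "i = 2*n \<or> i = 2*n+1 \<or> i = 2*n+2 \<or> i = 2*n+5")
    case True then show ?thesis using a b c d by (auto simp: vzero_def)
  next
    case False then show ?thesis by (simp add: stepP_def vzero_def)
  qed
qed

lemma stepP_out: "\<not> Pc n i \<Longrightarrow> stepP n x v i = 0"
  by (auto simp: stepP_def Pc_def)

lemma Qm_stepP:
  assumes "Ponly n v" "Pc n i"
  shows "2 * Qm n v x i = stepP n x v i"
proof -
  have z: "\<And>j. \<not> Pc n j \<Longrightarrow> v j = 0" using assms(1) by (simp add: Ponly_def)
  have "Gl n v x = 0" by (rule Gl_zero) (rule z, simp add: Pc_def)
  moreover have "v (2*n+3) = 0" "v (2*n+4) = 0" by (rule z, simp add: Pc_def)+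
  ultimately show ?thesis using assms(2)
    by (auto simp: Qm_def stepP_def Pc_def algebra_simps)
qed

lemma Qm_low: "i < n \<Longrightarrow> Qm n x y i = 0"
  by (simp add: Qm_def)

lemma Qm_out: "\<not> Pc n i \<Longrightarrow> Qm n x y i = 0"
  by (auto simp: Qm_def Pc_def)

lemma Ad_closed:
  assumes A: "is_algebra n m Psi" and l: "l \<in> {2..m}"
  shows "Ad Psi l (piA n x) (piA n v) \<in> fvec n"
  unfolding Ad_def using l by (intro alg_closed[OF A l]) auto

lemma Ad_PsiB:
  assumes l: "l \<in> {2..m}"
  shows "Ad (PsiB n Psi) l x v = (if l = 2 then vadd (Ad Psi l (piA n x) (piA n v)) (Qm n v x)
            else Ad Psi l (piA n x) (piA n v))"
proof -
  have "map (piA n) (v # replicate (l - 1) x) = piA n v # replicate (l - 1) (piA n x)" by simp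
  moreover have "l = 2 \<Longrightarrow> replicate (l - 1) x = [x]" by simp
  ultimately show ?thesis by (simp add: Ad_def PsiB_def)
qed

lemma piA_Ad:
  assumes A: "is_algebra n m Psi" and l: "l \<in> {2..m}"
  shows "piA n (Ad (PsiB n Psi) l x v) = Ad Psi l (piA n x) (piA n v)"
proof -
  have c: "Ad Psi l (piA n x) (piA n v) \<in> fvec n" by (rule Ad_closed[OF A l])
  show ?thesis unfolding Ad_PsiB[OF l]
    using c by (auto simp: piA_def fun_eq_iff vadd_def fvec_def Qm_low)
qed

lemma piA_foldr:
  assumes A: "is_algebra n m Psi"
  shows "set ls \<subseteq> {2..m} \<Longrightarrow> piA n (foldr (\<lambda>l v. Ad (PsiB n Psi) l x v) ls y)
     = foldr (\<lambda>l v. Ad Psi l (piA n x) v) ls (piA n y)"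
proof (induction ls)
  case Nil then show ?case by simp
next
  case (Cons l ls)
  then show ?case using piA_Ad[OF A, of l x] by simp
qed

lemma EB_A:
  assumes A: "is_algebra n m Psi" and i: "i < n"
  shows "E_op m (PsiB n Psi) s x y i = E_op m Psi s (piA n x) (piA n y) i"
  unfolding E_op_def
proof (intro sum.cong refl)
  fix ls assume "ls \<in> E_index m s"
  then have "set ls \<subseteq> {2..m}" by (simp add: E_index_def)
  then have "piA n (foldr (\<lambda>l v. Ad (PsiB n Psi) l x v) ls y) i
     = foldr (\<lambda>l v. Ad Psi l (piA n x) v) ls (piA n y) i" using piA_foldr[OF A] by metis
  then show "of_nat (prod_list ls) * foldr (\<lambda>l v. Ad (PsiB n Psi) l x v) ls y i =
         of_nat (prod_list ls) * foldr (\<lambda>l v. Ad Psi l (piA n x) v) ls (piA n y) i"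
    using i by (simp add: piA_def)
qed

lemma Ad_high:
  assumes A: "is_algebra n m Psi" and l: "l \<in> {2..m}" and i: "n \<le> i"
  shows "Ad (PsiB n Psi) l x v i = (if l = 2 then Qm n v x i else 0)"
proof -
  have c: "Ad Psi l (piA n x) (piA n v) \<in> fvec n" by (rule Ad_closed[OF A l])
  then have "Ad Psi l (piA n x) (piA n v) i = 0" using i by (simp add: fvec_def)
  then show ?thesis unfolding Ad_PsiB[OF l] by (cases "l = 2") (auto simp: vadd_def)
qed

lemma EB_out:
  assumes A: "is_algebra n m Psi" and i: "n \<le> i" "\<not> Pc n i"
  shows "E_op m (PsiB n Psi) s x y i = 0"
  unfolding E_op_def
proof (intro sum.neutral ballI)
  fix ls assume h: "ls \<in> E_index m s"
  then obtain l r where ls: "ls = l # r" by (cases ls) (auto simp: E_index_def)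
  have l: "l \<in> {2..m}" using h ls by (auto simp: E_index_def)
  have "Qm n (foldr (\<lambda>l v. Ad (PsiB n Psi) l x v) r y) x i = 0" by (rule Qm_out[OF i(2)])
  then show "of_nat (prod_list ls) * foldr (\<lambda>l v. Ad (PsiB n Psi) l x v) ls y i = 0"
    using Ad_high[OF A l i(1)] ls by simp
qed

lemma EB_rec:
  fixes Psi :: "nat \<Rightarrow> ('k::field_char_0) vec list \<Rightarrow> 'k vec"
  assumes A: "is_algebra n m Psi" and s: "2 \<le> s" and i: "Pc n i"
  shows "E_op m (PsiB n Psi) s x y i = 2 * Qm n (E_op m (PsiB n Psi) (s - 1) x y) x i"
proof -
  let ?F = "\<lambda>l v. Ad (PsiB n Psi) l x v"
  let ?g = "\<lambda>ls. of_nat (prod_list ls) * Qm n (foldr ?F (tl ls) y) x i :: 'k"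
  have m2: "2 \<le> m" using A by (simp add: is_algebra_def)
  have ni: "n \<le> i" using i by (auto simp: Pc_def)
  have "E_op m (PsiB n Psi) s x y i = (\<Sum>ls\<in>E_index m s. of_nat (prod_list ls) * foldr ?F ls y i)"
    by (simp add: E_op_def)
  also have "\<dots> = (\<Sum>ls\<in>E_index m s. if hd ls = 2 then ?g ls else 0)"
  proof (intro sum.cong refl)
    fix ls assume h: "ls \<in> E_index m s"
    then obtain l r where ls: "ls = l # r" by (cases ls) (auto simp: E_index_def)
    have l: "l \<in> {2..m}" using h ls by (auto simp: E_index_def)
    show "of_nat (prod_list ls) * foldr ?F ls y i = (if hd ls = 2 then ?g ls else 0)"
      using Ad_high[OF A l ni] ls by simp
  qed
  also have "\<dots> = (\<Sum>ls\<in>{ls \<in> E_index m s. hd ls = 2}. ?g ls)"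
    by (rule sum.inter_filter[symmetric]) (rule E_index_finite)
  also have "\<dots> = (\<Sum>ls\<in>(Cons 2) ` E_index m (s - 1). ?g ls)"
    by (simp only: E_index_Cons[OF m2 s])
  also have "\<dots> = (\<Sum>r\<in>E_index m (s - 1). ?g (2 # r))"
    by (rule sum.reindex_cong[where l = "Cons 2"]) (auto simp: inj_on_def)
  also have "\<dots> = (\<Sum>r\<in>E_index m (s - 1). 2 * (of_nat (prod_list r) * Qm n (foldr ?F r y) x i))"
    by (simp add: algebra_simps)
  also have "\<dots> = 2 * (\<Sum>r\<in>E_index m (s - 1). of_nat (prod_list r) * Qm n (foldr ?F r y) x i)"
    by (simp add: sum_distrib_left)
  also have "\<dots> = 2 * Qm n (\<lambda>j. \<Sum>r\<in>E_index m (s - 1). of_nat (prod_list r) * foldr ?F r y j) x i"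
    by (simp add: Qm_sum1[OF E_index_finite])
  also have "\<dots> = 2 * Qm n (E_op m (PsiB n Psi) (s - 1) x y) x i"
    by (simp add: E_op_def)
  finally show ?thesis .
qed

lemma engelB:
  fixes Psi :: "nat \<Rightarrow> ('k::field_char_0) vec list \<Rightarrow> 'k vec"
  assumes A: "is_algebra n m Psi" and E: "engel_type n m Psi"
  shows "engel_type (2*n+6) m (PsiB n Psi)"
proof -
  obtain s0 where s0: "\<And>s x y. s \<ge> s0 \<Longrightarrow> x \<in> fvec n \<Longrightarrow> y \<in> fvec n \<Longrightarrow> E_op m Psi s x y = vzero"
    using E unfolding engel_type_def by blast
  let ?S = "s0 + 1"
  let ?E = "\<lambda>s x y. E_op m (PsiB n Psi) s x y"
  have Pon: "Ponly n (?E s x y)" if "s \<ge> ?S" for s x y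
    unfolding Ponly_def
  proof (intro allI impI)
    fix i assume np: "\<not> Pc n i"
    show "?E s x y i = 0"
    proof (cases "i < n")
      case True
      then show ?thesis using EB_A[OF A True] s0[of s "piA n x" "piA n y"] that
        by (simp add: vzero_def)
    next
      case False
      then show ?thesis using EB_out[OF A _ np] by simp
    qed
  qed
  have step: "?E s x y = stepP n x (?E (s - 1) x y)" if "s \<ge> ?S + 1" for s x y
  proof
    fix i
    show "?E s x y i = stepP n x (?E (s - 1) x y) i"
    proof (cases "Pc n i")
      case True
      have "?E s x y i = 2 * Qm n (?E (s - 1) x y) x i"
        by (rule EB_rec[OF A _ True]) (use that in simp)
      also have "\<dots> = stepP n x (?E (s - 1) x y) i"
        by (rule Qm_stepP[OF Pon True]) (use that in simp)
      finally show ?thesis .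
    next
      case False
      then show ?thesis using Pon[of s x y] that stepP_out[OF False]
        by (simp add: Ponly_def)
    qed
  qed
  show ?thesis unfolding engel_type_def
  proof (intro exI[of _ "?S + 4"] allI impI ballI)
    fix s x y assume s: "?S + 4 \<le> s"
    have e1: "?E s x y = stepP n x (?E (s - 1) x y)" by (rule step) (use s in simp)
    have e2: "?E (s-1) x y = stepP n x (?E (s - 1 - 1) x y)" by (rule step) (use s in simp)
    have e3: "?E (s-1-1) x y = stepP n x (?E (s - 1 - 1 - 1) x y)" by (rule step) (use s in simp)
    have e4: "?E (s-1-1-1) x y = stepP n x (?E (s - 1 - 1 - 1 - 1) x y)" by (rule step) (use s in simp)
    have "?E s x y = stepP n x (stepP n x (stepP n x (stepP n x (?E (s - 1 - 1 - 1 - 1) x y))))"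
      by (simp only: e1 e2 e3 e4)
    then show "?E s x y = vzero" by (simp only: stepP4)
  qed
qed


theorem mainTheorem6:
  fixes n m :: nat and Psi :: "nat \<Rightarrow> ('k::field_char_0) vec list \<Rightarrow> 'k vec"
  assumes "is_algebra n m Psi" and "engel_type n m Psi"
  shows "\<exists>n' Psi' f. is_algebra n' m Psi' \<and> is_prime_algebra n' m Psi' \<and>
           engel_type n' m Psi' \<and> is_embedding n m Psi n' Psi' f"
  using PsiB_alg[OF assms(1)] primeB[OF assms(1)] engelB[OF assms] embed[OF assms(1)] by blast

end
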